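(* Let $f\colon\mathbb Q\to\mathbb R$ be arbitrary and $\sigma\in\mathbb C$. Then for every $n\ge1$, $$F_{n,\sigma}(f)=\sum_{d=1}^n\frac{1}{d^{2\sigma}}\,(\mu*D_{f_\sigma})(d)=\sum_{d\le n}\frac{D_{f_\sigma}(d)}{d^{2\sigma}}\Big(\sum_{\lambda\le n/d}\frac{\mu(\lambda)}{\lambda^{2\sigma}}\Big).$$
   Context: $\mathcal F_n=\{j/m: 1\le j\le m\le n,\ \gcd(j,m)=1\}$. $f_\sigma(x)=f(x)/x^\sigma$ for rational $x>0$ ($x^\sigma=e^{\sigma\log x}$). $F_{n,\sigma}(f)=\sum_{\kappa/\lambda\in\mathcal F_n}(\kappa\lambda)^{-\sigma}f(\kappa/\lambda)$. $D_g(d)=\sum_{k=1}^d g(k/d)$. $\mu$ is the Möbius function and $(\mu*a)(d)=\sum_{e\mid d}\mu(d/e)a(e)$ is the Dirichlet convolution. *)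

theory Defs
  imports "HOL-Analysis.Analysis" "HOL-Computational_Algebra.Squarefree"
begin

text \<open>Moebius function: mu(n) = (-1)^(number of prime factors) if n is squarefree, 0 otherwise
  (mu 0 = 0 by convention; only n >= 1 is used).\<close>
definition moebius :: "nat \<Rightarrow> complex" where
  "moebius n = (if n = 0 then 0 else if squarefree n then (-1) ^ card (prime_factors n) else 0)"

definition dir_conv :: "(nat \<Rightarrow> complex) \<Rightarrow> (nat \<Rightarrow> complex) \<Rightarrow> nat \<Rightarrow> complex" where
  "dir_conv a b d = (\<Sum>e\<in>{e. e dvd d}. a (d div e) * b e)"

definition rpow :: "rat \<Rightarrow> complex \<Rightarrow> complex" where
  "rpow x s = exp (s * of_real (ln (real_of_rat x)))"

definition f_sigma :: "(rat \<Rightarrow> real) \<Rightarrow> complex \<Rightarrow> rat \<Rightarrow> complex" where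
  "f_sigma f s x = of_real (f x) / rpow x s"

text \<open>Farey fractions of order n, as pairs (j, m) in lowest terms.\<close>
definition farey_pairs :: "nat \<Rightarrow> (nat \<times> nat) set" where
  "farey_pairs n = {(j, m). 1 \<le> j \<and> j \<le> m \<and> m \<le> n \<and> coprime j m}"

definition F_sum :: "nat \<Rightarrow> complex \<Rightarrow> (rat \<Rightarrow> real) \<Rightarrow> complex" where
  "F_sum n s f = (\<Sum>(k, l)\<in>farey_pairs n.
      rpow (of_nat (k * l)) (- s) * of_real (f (of_nat k / of_nat l)))"

definition D_sum :: "(rat \<Rightarrow> complex) \<Rightarrow> nat \<Rightarrow> complex" where
  "D_sum g d = (\<Sum>k=1..d. g (of_nat k / of_nat d))"

end

theory Submission
  imports Defs
begin

lemma mu_1: "moebius 1 = 1"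
  by (simp add: moebius_def)

lemma mu_prime_mult:
  assumes p: "prime (p::nat)" and np: "\<not> p dvd e" and e: "e > 0"
  shows "moebius (p * e) = - moebius e"
proof -
  have cop: "coprime p e" using p np by (simp add: prime_imp_coprime)
  have sq: "squarefree (p * e) \<longleftrightarrow> squarefree e"
    using squarefree_mult_coprime[OF cop] squarefree_prime[OF p] squarefree_mono
    by (metis dvd_triv_right)
  have pf: "prime_factors (p * e) = insert p (prime_factors e)"
    using prime_factors_product[of p e] p e prime_prime_factors[OF p] by (simp add: prime_gt_0_nat)
  have pn: "p \<notin> prime_factors e" using np by auto
  have "card (prime_factors (p*e)) = Suc (card (prime_factors e))"
    using pf pn by simp
  then show ?thesis using sq e p by (auto simp: moebius_def prime_gt_0_nat)
qed

lemma mu_sq: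
  assumes p: "prime (p::nat)" and "p dvd e"
  shows "moebius (p * e) = 0"
proof -
  have "p^2 dvd p * e" using assms by (auto simp: power2_eq_square)
  then have "\<not> squarefree (p*e)" using p
    using not_squarefreeI[of p "p*e"] by (metis not_prime_unit)
  then show ?thesis by (simp add: moebius_def)
qed

lemma mu_sum:
  assumes "(m::nat) > 0"
  shows "(\<Sum>e\<in>{e. e dvd m}. moebius e) = (if m = 1 then 1 else 0)"
proof (cases "m = 1")
  case True
  then show ?thesis using mu_1 by (simp flip: One_nat_def)
next
  case False
  then obtain p where p: "prime p" "p dvd m" using prime_factor_nat by blast
  then obtain q where q: "m = p * q" by blast
  have q0: "q > 0" using assms q by auto
  have fin: "finite {e. e dvd m}" using assms by simp
  have finq: "finite {e. e dvd q}" using q0 by simp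
  let ?B = "{e::nat. p dvd e}"
  have s1: "(\<Sum>e\<in>{e. e dvd m}. moebius e) =
        (\<Sum>e\<in>{e. e dvd m} \<inter> ?B. moebius e) + (\<Sum>e\<in>{e. e dvd m} - ?B. moebius e)"
    using sum.Int_Diff[OF fin] by blast
  have i1: "{e. e dvd m} \<inter> ?B = (\<lambda>e. p * e) ` {e. e dvd q}"
    using q p(1) prime_gt_0_nat by (auto simp: image_iff)
  have i2: "{e. e dvd m} - ?B = {e. e dvd q} - ?B"
  proof (auto simp: q)
    fix e assume "e dvd p * q" "\<not> p dvd e"
    then have "coprime e p" using p(1) by (metis coprime_commute prime_imp_coprime)
    then show "e dvd q" using \<open>e dvd p * q\<close> coprime_dvd_mult_right_iff by blast
  qed
  have inj: "inj_on (\<lambda>e. p * e) {e. e dvd q}" using p(1) prime_gt_0_nat by (auto simp: inj_on_def)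
  have "(\<Sum>e\<in>{e. e dvd m} \<inter> ?B. moebius e) = (\<Sum>e\<in>{e. e dvd q}. moebius (p * e))"
    unfolding i1 using sum.reindex[OF inj] by simp
  also have "\<dots> = (\<Sum>e\<in>{e. e dvd q} \<inter> ?B. moebius (p * e)) + (\<Sum>e\<in>{e. e dvd q} - ?B. moebius (p * e))"
    using sum.Int_Diff[OF finq] by blast
  also have "(\<Sum>e\<in>{e. e dvd q} \<inter> ?B. moebius (p * e)) = 0"
    using mu_sq[OF p(1)] by simp
  also have "(\<Sum>e\<in>{e. e dvd q} - ?B. moebius (p * e)) = (\<Sum>e\<in>{e. e dvd q} - ?B. - moebius e)"
    apply (rule sum.cong, simp)
    using mu_prime_mult[OF p(1)] q0 by (metis DiffE dvd_pos_nat mem_Collect_eq)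
  finally show ?thesis using s1 i2 False by (simp add: sum_negf)
qed


lemma div_reflect:
  assumes "(d::nat) > 0"
  shows "(\<Sum>e\<in>{e. e dvd d}. h (d div e)) = (\<Sum>e\<in>{e. e dvd d}. (h e :: complex))"
  by (rule sum.reindex_bij_witness[where i = "\<lambda>e. d div e" and j = "\<lambda>e. d div e"])
     (use assms in \<open>auto simp: div_div_eq_right dvd_div_eq_mult\<close>)

definition Pc :: "(rat \<Rightarrow> complex) \<Rightarrow> nat \<Rightarrow> complex" where
  "Pc g c = (\<Sum>k\<in>{k\<in>{1..c}. coprime k c}. g (of_nat k / of_nat c))"

lemma D_decomp:
  assumes d: "(d::nat) > 0"
  shows "D_sum g d = (\<Sum>c\<in>{c. c dvd d}. Pc g c)"
proof -
  let ?S = "SIGMA c:{c. c dvd d}. {k\<in>{1..c}. coprime k c}"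
  have fin: "finite {c. c dvd d}" using d by simp
  have "(\<Sum>c\<in>{c. c dvd d}. Pc g c) = (\<Sum>(c,k)\<in>?S. g (of_nat k / of_nat c))"
    unfolding Pc_def by (rule sum.Sigma) (use fin in auto)
  also have "\<dots> = (\<Sum>k\<in>{1..d}. g (of_nat k / of_nat d))"
  proof (rule sum.reindex_bij_witness[where i = "\<lambda>k. (d div gcd k d, k div gcd k d)"
        and j = "\<lambda>(c,k). k * (d div c)"])
    fix a assume a: "a \<in> ?S"
    obtain c k where ck: "a = (c,k)" by fastforce
    have c: "c dvd d" "1 \<le> k" "k \<le> c" "coprime k c" using a ck by auto
    have c0: "c > 0" using c by auto
    obtain u where u: "d = c * u" using c by blast
    have u0: "u > 0" using u d by auto
    have du: "d div c = u" using u c0 by simp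
    have "gcd (u * k) (u * c) = u * gcd k c" by (rule gcd_mult_distrib_nat[symmetric])
    then have g: "gcd (k * u) d = u" using u c(4) by (simp add: mult.commute)
    show "(d div gcd (case a of (c, k) \<Rightarrow> k * (d div c)) d,
           (case a of (c, k) \<Rightarrow> k * (d div c)) div gcd (case a of (c, k) \<Rightarrow> k * (d div c)) d) = a"
      using ck du g u u0 by simp
    show "(case a of (c, k) \<Rightarrow> k * (d div c)) \<in> {1..d}"
      using ck du u u0 c by (auto simp: mult.commute[of c u])
    have "(of_nat (k * u) :: rat) / of_nat (c * u) = of_nat k / of_nat c"
      using u0 by simp
    then show "g (of_nat (case a of (c, k) \<Rightarrow> k * (d div c)) / of_nat d) = (case a of (c, k) \<Rightarrow> g (of_nat k / of_nat c))"
      using ck du u by simp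
  next
    fix b assume b: "b \<in> {1..d::nat}"
    define gg where "gg = gcd b d"
    have gg0: "gg > 0" using d gg_def by simp
    have "gg dvd d" "gg dvd b" using gg_def by auto
    then obtain w where w: "d = gg * w" by blast
    have w0: "w > 0" using w d by auto
    have ddg: "d div (d div gg) = gg" using w w0 gg0 by simp
    show "(case (d div gcd b d, b div gcd b d) of (c, k) \<Rightarrow> k * (d div c)) = b"
      using gg0 \<open>gg dvd b\<close> ddg unfolding gg_def[symmetric] by simp
    show "(d div gcd b d, b div gcd b d) \<in> ?S"
    proof -
      have 1: "d div gg dvd d" using w w0 gg0 by simp
      have "gg \<le> b" using b \<open>gg dvd b\<close> by (intro dvd_imp_le) auto
      then have "0 < b div gg" using gg0 by (simp add: div_greater_zero_iff)
      then have 2: "1 \<le> b div gg" by simp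
      have 3: "b div gg \<le> d div gg" using b by (simp add: div_le_mono)
      have 4: "coprime (b div gg) (d div gg)" unfolding gg_def using d by (intro div_gcd_coprime) auto
      show ?thesis using 1 2 3 4 unfolding gg_def[symmetric] by simp
    qed
  qed
  finally show ?thesis unfolding D_sum_def by simp
qed


lemma dvd_div_iff_mult:
  assumes "(d::nat) > 0" "e dvd d"
  shows "c dvd d div e \<longleftrightarrow> c * e dvd d"
  using assms by (auto elim!: dvdE simp: mult.commute)

lemma inversion:
  assumes d: "(d::nat) > 0"
  shows "dir_conv moebius (D_sum g) d = Pc g d"
proof -
  let ?D = "{e. e dvd d}"
  have fin: "finite ?D" using d by simp
  have "dir_conv moebius (D_sum g) d = (\<Sum>e\<in>?D. moebius (d div e) * D_sum g (d div (d div e)))"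
    unfolding dir_conv_def
    by (rule sum.cong) (use d in \<open>auto simp: div_div_eq_right dvd_div_eq_mult elim!: dvdE\<close>)
  also have "\<dots> = (\<Sum>e\<in>?D. moebius e * D_sum g (d div e))"
    by (rule div_reflect[OF d, where h = "\<lambda>e. moebius e * D_sum g (d div e)"])
  also have "\<dots> = (\<Sum>e\<in>?D. \<Sum>c\<in>{c. c \<in> ?D \<and> c * e dvd d}. moebius e * Pc g c)"
  proof (rule sum.cong)
    fix e assume e: "e \<in> ?D"
    then have dpos: "d div e > 0" using d by (auto elim!: dvdE)
    have "{c. c dvd d div e} = {c. c \<in> ?D \<and> c * e dvd d}"
      using e d dvd_div_iff_mult[OF d] by (auto intro: dvd_mult_left)
    then show "moebius e * D_sum g (d div e) = (\<Sum>c\<in>{c. c \<in> ?D \<and> c * e dvd d}. moebius e * Pc g c)"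
      using D_decomp[OF dpos] by (simp add: sum_distrib_left)
  qed simp
  also have "\<dots> = (\<Sum>c\<in>?D. \<Sum>e\<in>{e. e \<in> ?D \<and> c * e dvd d}. moebius e * Pc g c)"
    by (rule sum.swap_restrict[OF fin fin])
  also have "\<dots> = (\<Sum>c\<in>?D. Pc g c * (\<Sum>e\<in>{e. e dvd d div c}. moebius e))"
  proof (rule sum.cong)
    fix c assume c: "c \<in> ?D"
    have "{e. e dvd d div c} = {e. e \<in> ?D \<and> c * e dvd d}"
      using c d dvd_div_iff_mult[OF d] by (auto intro: dvd_mult_left simp: mult.commute)
    then show "(\<Sum>e\<in>{e. e \<in> ?D \<and> c * e dvd d}. moebius e * Pc g c) = Pc g c * (\<Sum>e\<in>{e. e dvd d div c}. moebius e)"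
      by (simp add: sum_distrib_left mult.commute)
  qed simp
  also have "\<dots> = (\<Sum>c\<in>?D. if c = d then Pc g c else 0)"
  proof (rule sum.cong)
    fix c assume c: "c \<in> ?D"
    then have dpos: "d div c > 0" using d by (auto elim!: dvdE)
    have "d div c = 1 \<longleftrightarrow> c = d" using c d by (auto elim!: dvdE)
    then show "Pc g c * (\<Sum>e\<in>{e. e dvd d div c}. moebius e) = (if c = d then Pc g c else 0)"
      using mu_sum[OF dpos] by simp
  qed simp
  also have "\<dots> = Pc g d" using fin by simp
  finally show ?thesis .
qed


lemma rpow_nz: "rpow x s \<noteq> 0"
  by (simp add: rpow_def)

lemma rpow_mult:
  assumes "x > 0" "y > 0"
  shows "rpow (x * y) s = rpow x s * rpow y s"
proof -
  have "ln (real_of_rat (x * y)) = ln (real_of_rat x) + ln (real_of_rat y)"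
    using assms by (simp add: of_rat_mult ln_mult)
  then show ?thesis by (simp add: rpow_def distrib_left exp_add)
qed

lemma rpow_div:
  assumes "x > 0" "y > 0"
  shows "rpow (x / y) s = rpow x s / rpow y s"
proof -
  have "ln (real_of_rat (x / y)) = ln (real_of_rat x) - ln (real_of_rat y)"
    using assms by (simp add: of_rat_divide ln_div)
  then show ?thesis by (simp add: rpow_def right_diff_distrib exp_diff)
qed

lemma rpow_neg: "rpow x (- s) = 1 / rpow x s"
  by (simp add: rpow_def exp_minus field_simps)

lemma rpow_two: "rpow x (2 * s) = rpow x s * rpow x s"
  by (simp add: rpow_def exp_add[symmetric] mult.assoc)

lemma first_eq:
  "F_sum n \<sigma> f = (\<Sum>d=1..n. Pc (f_sigma f \<sigma>) d / rpow (of_nat d) (2 * \<sigma>))"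
proof -
  let ?S = "SIGMA l:{1..n}. {k\<in>{1..l}. coprime k l}"
  have fp: "farey_pairs n = prod.swap ` ?S" unfolding farey_pairs_def by auto
  have "F_sum n \<sigma> f = (\<Sum>(l,k)\<in>?S. rpow (of_nat (k * l)) (- \<sigma>) * of_real (f (of_nat k / of_nat l)))"
    unfolding F_sum_def fp by (subst sum.reindex) (auto simp: case_prod_beta)
  also have "\<dots> = (\<Sum>l=1..n. \<Sum>k\<in>{k\<in>{1..l}. coprime k l}. rpow (of_nat (k * l)) (- \<sigma>) * of_real (f (of_nat k / of_nat l)))"
    by (rule sum.Sigma[symmetric]) auto
  also have "\<dots> = (\<Sum>d=1..n. Pc (f_sigma f \<sigma>) d / rpow (of_nat d) (2 * \<sigma>))"
    unfolding Pc_def sum_divide_distrib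
  proof (intro sum.cong refl)
    fix l k assume l: "l \<in> {1..n}" and k: "k \<in> {k\<in>{1..l}. coprime k l}"
    have kp: "(of_nat k :: rat) > 0" "(of_nat l :: rat) > 0" using l k by auto
    have "rpow (of_nat (k * l)) (- \<sigma>) = 1 / (rpow (of_nat k) \<sigma> * rpow (of_nat l) \<sigma>)"
      using kp by (simp add: rpow_neg rpow_mult)
    moreover have "rpow (of_nat k / of_nat l) \<sigma> = rpow (of_nat k) \<sigma> / rpow (of_nat l) \<sigma>"
      using kp by (simp add: rpow_div)
    ultimately show "rpow (of_nat (k * l)) (- \<sigma>) * of_real (f (of_nat k / of_nat l)) =
         f_sigma f \<sigma> (of_nat k / of_nat l) / rpow (of_nat l) (2 * \<sigma>)"
      unfolding f_sigma_def rpow_two using rpow_nz[of "of_nat k" \<sigma>] rpow_nz[of "of_nat l" \<sigma>]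
      by (simp add: field_simps)
  qed
  finally show ?thesis .
qed

lemma second_eq:
  "(\<Sum>d=1..n. dir_conv moebius D d / rpow (of_nat d) (2 * \<sigma>))
   = (\<Sum>d=1..n. D d / rpow (of_nat d) (2 * \<sigma>)
                 * (\<Sum>l=1..n div d. moebius l / rpow (of_nat l) (2 * \<sigma>)))"
proof -
  let ?r = "\<lambda>d. rpow (of_nat d) (2 * \<sigma>)"
  let ?S = "SIGMA d:{1..n}. {e. e dvd d}"
  let ?T = "SIGMA e:{1..n}. {1..n div e}"
  have "(\<Sum>d=1..n. dir_conv moebius D d / ?r d) = (\<Sum>(d,e)\<in>?S. moebius (d div e) * D e / ?r d)"
    unfolding dir_conv_def sum_divide_distrib by (rule sum.Sigma) auto
  also have "\<dots> = (\<Sum>(e,l)\<in>?T. moebius l * D e / ?r (e * l))"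
  proof (rule sum.reindex_bij_witness[where i = "\<lambda>(e,l). (e * l, e)" and j = "\<lambda>(d,e). (e, d div e)"])
    fix a assume "a \<in> ?S"
    then obtain d e where a: "a = (d,e)" "e dvd d" "1 \<le> d" "d \<le> n" by auto
    have e: "1 \<le> e" "e \<le> d" using a by (auto intro: dvd_imp_le elim!: dvdE)
    show "(case case a of (d, e) \<Rightarrow> (e, d div e) of (e, l) \<Rightarrow> (e * l, e)) = a" using a by simp
    show "(case a of (d, e) \<Rightarrow> (e, d div e)) \<in> ?T" using a e
      by (auto simp: div_le_mono elim!: dvdE)
    show "(case case a of (d, e) \<Rightarrow> (e, d div e) of (e, l) \<Rightarrow> moebius l * D e / ?r (e * l)) =
          (case a of (d, e) \<Rightarrow> moebius (d div e) * D e / ?r d)"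
      using a by (simp flip: of_nat_mult)
  next
    fix b assume "b \<in> ?T"
    then obtain e l where b: "b = (e,l)" "1 \<le> e" "e \<le> n" "1 \<le> l" "l \<le> n div e" by auto
    have "e * l \<le> e * (n div e)" using b by simp
    also have "\<dots> \<le> n" by simp
    finally have "e * l \<le> n" .
    then show "(case b of (e, l) \<Rightarrow> (e * l, e)) \<in> ?S" using b by auto
    show "(case case b of (e, l) \<Rightarrow> (e * l, e) of (d, e) \<Rightarrow> (e, d div e)) = b" using b by simp
  qed
  also have "\<dots> = (\<Sum>e=1..n. \<Sum>l=1..n div e. moebius l * D e / ?r (e * l))"
    by (rule sum.Sigma[symmetric]) auto
  also have "\<dots> = (\<Sum>e=1..n. D e / ?r e * (\<Sum>l=1..n div e. moebius l / ?r l))"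
    unfolding sum_distrib_left
  proof (intro sum.cong refl)
    fix e l assume "e \<in> {1..n}" "l \<in> {1..n div e}"
    then have p: "(of_nat e :: rat) > 0" "(of_nat l :: rat) > 0" by auto
    have "?r (e * l) = ?r e * ?r l" using rpow_mult[OF p] by simp
    then show "moebius l * D e / ?r (e * l) = D e / ?r e * (moebius l / ?r l)"
      by simp
  qed
  finally show ?thesis .
qed

theorem lemma3p3:
  fixes f :: "rat \<Rightarrow> real" and \<sigma> :: complex and n :: nat
  assumes "n \<ge> 1"
  shows "F_sum n \<sigma> f
           = (\<Sum>d=1..n. dir_conv moebius (D_sum (f_sigma f \<sigma>)) d / rpow (of_nat d) (2 * \<sigma>))
       \<and> F_sum n \<sigma> f
           = (\<Sum>d=1..n. D_sum (f_sigma f \<sigma>) d / rpow (of_nat d) (2 * \<sigma>)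
                 * (\<Sum>l=1..n div d. moebius l / rpow (of_nat l) (2 * \<sigma>)))"
proof -
  have 1: "F_sum n \<sigma> f
           = (\<Sum>d=1..n. dir_conv moebius (D_sum (f_sigma f \<sigma>)) d / rpow (of_nat d) (2 * \<sigma>))"
    unfolding first_eq by (intro sum.cong refl) (simp add: inversion)
  then show ?thesis using second_eq by simp
qed

end
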